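(* Let $a,b,c\in\mathbb R$. The sine polynomial $a\sin(x)+b\sin(2x)+c\sin(3x)$ is nonnegative for all $x\in[0,\pi]$ if and only if either (i) $|b|\geq 4c$ and $a-2|b|+3c\geq 0$, or (ii) $|b|<4c$ and $a\geq c+\frac{b^2}{4c}$. In all cases, a necessary condition for this nonnegativity is $a\geq |b|$. *)

theory Defs
  imports Complex_Main
begin

end

theory Submission
  imports Defs "HOL-Analysis.Analysis"
begin

lemma sin3_id: fixes x a b c :: real shows "a * sin x + b * sin (2 * x) + c * sin (3 * x)
   = sin x * (4*c*(cos x)^2 + 2*b*cos x + a - c)"
proof -
  have "sin (3*x) = sin (2*x + x)" by (simp add: algebra_simps)
  also have "\<dots> = sin x * (4*(cos x)^2 - 1)"
    unfolding sin_add sin_double cos_double using sin_cos_squared_add[of x]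
    by algebra
  finally have h: "sin (3*x) = sin x * (4*(cos x)^2 - 1)" .
  show ?thesis unfolding h sin_double by (simp add: algebra_simps power2_eq_square)
qed

lemma quad:
  fixes a b c :: real
  shows "(\<forall>t\<in>{-1..1}. 4*c*t^2 + 2*b*t + a - c \<ge> 0) \<longleftrightarrow>
           ((\<bar>b\<bar> \<ge> 4 * c \<and> a - 2 * \<bar>b\<bar> + 3 * c \<ge> 0) \<or>
            (\<bar>b\<bar> < 4 * c \<and> a \<ge> c + b\<^sup>2 / (4 * c)))"
proof
  assume H: "\<forall>t\<in>{-1..1}. 4*c*t^2 + 2*b*t + a - c \<ge> 0"
  show "((\<bar>b\<bar> \<ge> 4 * c \<and> a - 2 * \<bar>b\<bar> + 3 * c \<ge> 0) \<or>
            (\<bar>b\<bar> < 4 * c \<and> a \<ge> c + b\<^sup>2 / (4 * c)))"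
  proof (cases "\<bar>b\<bar> < 4 * c")
    case True
    hence c: "c > 0" by linarith
    define t0 where "t0 = - b / (4*c)"
    have "\<bar>t0\<bar> \<le> 1" using True c by (simp add: t0_def abs_div)
    hence "4*c*t0^2 + 2*b*t0 + a - c \<ge> 0" using H by (auto simp: abs_le_iff)
    moreover have "4*c*t0^2 + 2*b*t0 + a - c = a - c - b^2/(4*c)"
      using c by (simp add: t0_def field_simps power2_eq_square)
    ultimately show ?thesis using True by simp
  next
    case False
    have "4*c*1^2 + 2*b*1 + a - c \<ge> 0" "4*c*(-1)^2 + 2*b*(-1) + a - c \<ge> 0"
      using H[rule_format, of 1] H[rule_format, of "-1"] by auto
    thus ?thesis using False by (simp add: abs_if)
  qed
next
  assume C: "((\<bar>b\<bar> \<ge> 4 * c \<and> a - 2 * \<bar>b\<bar> + 3 * c \<ge> 0) \<or>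
            (\<bar>b\<bar> < 4 * c \<and> a \<ge> c + b\<^sup>2 / (4 * c)))"
  show "\<forall>t\<in>{-1..1}. 4*c*t^2 + 2*b*t + a - c \<ge> 0"
  proof
    fix t :: real assume t: "t \<in> {-1..1}"
    hence t2: "t^2 \<le> 1" by (simp add: abs_square_le_1 abs_le_iff)
    have tb: "2*b*t \<ge> -2*\<bar>b\<bar>*\<bar>t\<bar>"
    proof -
      have "\<bar>b*t\<bar> = \<bar>b\<bar>*\<bar>t\<bar>" by (simp add: abs_mult)
      moreover have "b*t \<ge> -\<bar>b*t\<bar>" by linarith
      ultimately show ?thesis by linarith
    qed
    show "4*c*t^2 + 2*b*t + a - c \<ge> 0"
    proof (cases "\<bar>b\<bar> < 4 * c")
      case True
      hence c: "c > 0" by linarith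
      have "a \<ge> c + b\<^sup>2 / (4 * c)" using C True by auto
      hence "4*c*a \<ge> 4*c*c + b^2" using c by (simp add: field_simps)
      moreover have "4*c*(4*c*t^2 + 2*b*t + a - c) = (4*c*t+b)^2 + (4*c*a - 4*c*c - b^2)"
        by (simp add: algebra_simps power2_eq_square)
      ultimately have "4*c*(4*c*t^2 + 2*b*t + a - c) \<ge> 0" by simp
      thus ?thesis using c by (simp add: zero_le_mult_iff)
    next
      case False
      hence A: "a - 2 * \<bar>b\<bar> + 3 * c \<ge> 0" using C by auto
      show ?thesis
      proof (cases "c \<le> 0")
        case True
        have "4*c*(t^2-1) \<ge> 0" using True t2 by (simp add: mult_nonpos_nonpos)
        moreover have "\<bar>b\<bar>*\<bar>t\<bar> \<le> \<bar>b\<bar>" using t by (intro mult_left_le) (auto simp: abs_le_iff)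
        ultimately show ?thesis using tb A by (simp add: algebra_simps)
      next
        case c: False
        define s where "s = \<bar>t\<bar>"
        have s: "0 \<le> s" "s \<le> 1" using t by (auto simp: s_def)
        have ts: "t^2 = s^2" by (simp add: s_def)
        have cs: "c * s \<le> c" using c s by (simp add: mult_left_le)
        have "(1-s)*(2*\<bar>b\<bar> - 4*c*(1+s)) \<ge> 0"
          using s False cs by (intro mult_nonneg_nonneg) (auto simp: algebra_simps)
        moreover have "4*c* s^2 - 2*\<bar>b\<bar>* s + a - c = (1-s)*(2*\<bar>b\<bar> - 4*c*(1+s)) + (a - 2 * \<bar>b\<bar> + 3 * c)"
          by (simp add: algebra_simps power2_eq_square)
        ultimately have "4*c* s^2 - 2*\<bar>b\<bar>* s + a - c \<ge> 0" using A by linarith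
        moreover have "4*c*t^2 = 4*c* s^2" using ts by simp
        moreover have "\<bar>b\<bar>*\<bar>t\<bar> = \<bar>b\<bar>* s" by (simp add: s_def)
        ultimately show ?thesis using tb by linarith
      qed
    qed
  qed
qed

lemma reduce:
  fixes a b c :: real
  shows "(\<forall>x\<in>{0..pi}. a * sin x + b * sin (2 * x) + c * sin (3 * x) \<ge> 0) \<longleftrightarrow>
         (\<forall>t\<in>{-1..1}. 4*c*t^2 + 2*b*t + a - c \<ge> 0)"
  (is "?L \<longleftrightarrow> (\<forall>t\<in>_. ?g t \<ge> 0)")
proof
  assume R: "\<forall>t\<in>{-1..1}. ?g t \<ge> 0"
  show ?L
  proof
    fix x assume x: "x \<in> {0..pi}"
    have "sin x \<ge> 0" using x by (simp add: sin_ge_zero)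
    moreover have "cos x \<in> {-1..1}" by simp
    ultimately show "a * sin x + b * sin (2 * x) + c * sin (3 * x) \<ge> 0"
      using R by (simp only: sin3_id) (auto intro: mult_nonneg_nonneg)
  qed
next
  assume L: ?L
  have open_int: "{-1<..<1} \<subseteq> {t. ?g t \<ge> 0}"
  proof
    fix t :: real assume t: "t \<in> {-1<..<1}"
    define x where "x = arccos t"
    have x: "x \<in> {0..pi}" "cos x = t" using t by (auto simp: x_def arccos_lbound arccos_ubound)
    have "sin x > 0" using t by (simp add: x_def sin_arccos abs_square_less_1 abs_less_iff)
    moreover have "sin x * ?g (cos x) \<ge> 0" using L x(1) by (simp add: sin3_id)
    ultimately show "t \<in> {t. ?g t \<ge> 0}" using x(2) by (simp add: zero_le_mult_iff)
  qed
  have "closed {t. ?g t \<ge> 0}"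
    by (intro closed_Collect_le continuous_intros)
  hence "closure {-1<..<1} \<subseteq> {t. ?g t \<ge> 0}" using open_int by (rule closure_minimal[rotated])
  thus "\<forall>t\<in>{-1..1}. ?g t \<ge> 0" by auto
qed

theorem corollary1:
  fixes a b c :: real
  shows "((\<forall>x\<in>{0..pi}. a * sin x + b * sin (2 * x) + c * sin (3 * x) \<ge> 0) \<longleftrightarrow>
           ((\<bar>b\<bar> \<ge> 4 * c \<and> a - 2 * \<bar>b\<bar> + 3 * c \<ge> 0) \<or>
            (\<bar>b\<bar> < 4 * c \<and> a \<ge> c + b\<^sup>2 / (4 * c))))
       \<and> ((\<forall>x\<in>{0..pi}. a * sin x + b * sin (2 * x) + c * sin (3 * x) \<ge> 0) \<longrightarrow> a \<ge> \<bar>b\<bar>)"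
proof -
  have E: "(\<forall>x\<in>{0..pi}. a * sin x + b * sin (2 * x) + c * sin (3 * x) \<ge> 0) \<longleftrightarrow>
           ((\<bar>b\<bar> \<ge> 4 * c \<and> a - 2 * \<bar>b\<bar> + 3 * c \<ge> 0) \<or>
            (\<bar>b\<bar> < 4 * c \<and> a \<ge> c + b\<^sup>2 / (4 * c)))"
    using reduce quad by blast
  have N: "a \<ge> \<bar>b\<bar>" if C: "((\<bar>b\<bar> \<ge> 4 * c \<and> a - 2 * \<bar>b\<bar> + 3 * c \<ge> 0) \<or>
            (\<bar>b\<bar> < 4 * c \<and> a \<ge> c + b\<^sup>2 / (4 * c)))"
    using C
  proof
    assume "\<bar>b\<bar> \<ge> 4 * c \<and> a - 2 * \<bar>b\<bar> + 3 * c \<ge> 0"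
    thus ?thesis by linarith
  next
    assume h: "\<bar>b\<bar> < 4 * c \<and> a \<ge> c + b\<^sup>2 / (4 * c)"
    hence c: "c > 0" by linarith
    have "4*c*a \<ge> 4*c*c + b^2" using h c by (simp add: field_simps)
    moreover have "(2*c - \<bar>b\<bar>)^2 \<ge> 0" by simp
    moreover have "(2*c - \<bar>b\<bar>)^2 = 4*c*c - 4*c*\<bar>b\<bar> + b^2"
      by (simp add: power2_eq_square algebra_simps)
    ultimately have "4*c*a \<ge> 4*c*\<bar>b\<bar>" by linarith
    thus ?thesis using c by simp
  qed
  show ?thesis using E N by blast
qed

end
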